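(* Let $M$ be a model of a complete affine theory $T$ and let $f:M\to M$ be a definable function. Then there exists a type $p(x)\in S_1(T)$ which is $f$-invariant, i.e. $p(\phi(x))=p(\phi(f(x)))$ for every affine formula $\phi(x)$. In particular, if $M$ is $\aleph_0$-saturated then there exists $c\in M$ with $tp(c)=tp(f(c))$.
   Context: Affine continuous logic: $L$-structures are complete metric spaces $(M,d)$ with $d\le1$ and Lipschitz interpretations of function symbols and $[0,1]$-valued relation symbols. Affine formulas are built from $1$ and atomic formulas (including $d$) using only $r\cdot\phi$ ($r\in\mathbb R$), $\phi+\psi$, $\inf_x$, $\sup_x$. $T$ is complete: for each sentence $\phi$ there is a unique $r$ with $T\models\phi=r$. A predicate $P:M^n\to\mathbb R$ is definable (without parameters) if it is a uniform limit of $\phi_k^M$ for affine formulas $\phi_k$; the same sequence defines it in all models of $T$. A function $f:M\to M$ is definable if $(x,y)\mapsto d(f(x),y)$ is a definable predicate; then for every formula $\phi(x)$, $x\mapsto\phi(f(x))$ is a definable predicate. A $1$-type of $T$ is a maximal set of conditions in one variable satisfiable with $T$, identified with a positive linear functional $\phi\mapsto p(\phi)$ on formulas with $p(1)=1$, extended to definable predicates by $p(P)=\lim_kp(\phi_k)$ when $\phi_k\to P$ uniformly. $S_1(T)$ is the set of $1$-types. $tp(c)$ is the type $\phi\mapsto\phi^M(c)$. $M$ is $\aleph_0$-saturated if every type over a finite subset of $M$ is realized in $M$. *)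

theory Defs
  imports "HOL-Analysis.Analysis"
begin

datatype 'f aterm = AVar nat | AFn 'f "'f aterm list"

datatype ('f, 'r) aform =
    AOne
  | ADist "'f aterm" "'f aterm"
  | ARel 'r "'f aterm list"
  | AScale real "('f, 'r) aform"
  | AAdd "('f, 'r) aform" "('f, 'r) aform"
  | AInf nat "('f, 'r) aform"
  | ASup nat "('f, 'r) aform"

fun wf_term :: "('f \<Rightarrow> nat) \<Rightarrow> 'f aterm \<Rightarrow> bool" where
  "wf_term fa (AVar i) = True"
| "wf_term fa (AFn g ts) = (length ts = fa g \<and> (\<forall>t\<in>set ts. wf_term fa t))"

fun wf_form :: "('f \<Rightarrow> nat) \<Rightarrow> ('r \<Rightarrow> nat) \<Rightarrow> ('f, 'r) aform \<Rightarrow> bool" where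
  "wf_form fa ra AOne = True"
| "wf_form fa ra (ADist t u) = (wf_term fa t \<and> wf_term fa u)"
| "wf_form fa ra (ARel R ts) = (length ts = ra R \<and> (\<forall>t\<in>set ts. wf_term fa t))"
| "wf_form fa ra (AScale c \<phi>) = wf_form fa ra \<phi>"
| "wf_form fa ra (AAdd \<phi> \<psi>) = (wf_form fa ra \<phi> \<and> wf_form fa ra \<psi>)"
| "wf_form fa ra (AInf i \<phi>) = wf_form fa ra \<phi>"
| "wf_form fa ra (ASup i \<phi>) = wf_form fa ra \<phi>"

fun tfv :: "'f aterm \<Rightarrow> nat set" where
  "tfv (AVar i) = {i}"
| "tfv (AFn g ts) = (\<Union>t\<in>set ts. tfv t)"

fun ffv :: "('f, 'r) aform \<Rightarrow> nat set" where
  "ffv AOne = {}"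
| "ffv (ADist t u) = tfv t \<union> tfv u"
| "ffv (ARel R ts) = (\<Union>t\<in>set ts. tfv t)"
| "ffv (AScale c \<phi>) = ffv \<phi>"
| "ffv (AAdd \<phi> \<psi>) = ffv \<phi> \<union> ffv \<psi>"
| "ffv (AInf i \<phi>) = ffv \<phi> - {i}"
| "ffv (ASup i \<phi>) = ffv \<phi> - {i}"

text \<open>An L-structure: the universe is the whole (nonempty) complete metric type 'a,
  with distance bounded by 1; FI interprets function symbols, RI relation symbols.\<close>

definition lipschitz_list :: "nat \<Rightarrow> ('a::metric_space list \<Rightarrow> 'b::metric_space) \<Rightarrow> bool" where
  "lipschitz_list n F \<longleftrightarrow> (\<exists>L. \<forall>xs ys. length xs = n \<longrightarrow> length ys = n \<longrightarrow>
      dist (F xs) (F ys) \<le> L * (\<Sum>i<n. dist (xs ! i) (ys ! i)))"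

definition is_structure ::
  "('f \<Rightarrow> nat) \<Rightarrow> ('r \<Rightarrow> nat) \<Rightarrow> ('f \<Rightarrow> 'a::complete_space list \<Rightarrow> 'a) \<Rightarrow> ('r \<Rightarrow> 'a list \<Rightarrow> real) \<Rightarrow> bool"
  where
  "is_structure fa ra FI RI \<longleftrightarrow>
     (\<forall>x y::'a. dist x y \<le> 1)
   \<and> (\<forall>g. lipschitz_list (fa g) (FI g))
   \<and> (\<forall>R. lipschitz_list (ra R) (RI R))
   \<and> (\<forall>R xs. length xs = ra R \<longrightarrow> 0 \<le> RI R xs \<and> RI R xs \<le> 1)"

fun teval :: "('f \<Rightarrow> 'a list \<Rightarrow> 'a) \<Rightarrow> (nat \<Rightarrow> 'a) \<Rightarrow> 'f aterm \<Rightarrow> 'a" where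
  "teval FI s (AVar i) = s i"
| "teval FI s (AFn g ts) = FI g (map (teval FI s) ts)"

fun feval :: "('f \<Rightarrow> 'a::metric_space list \<Rightarrow> 'a) \<Rightarrow> ('r \<Rightarrow> 'a list \<Rightarrow> real) \<Rightarrow> (nat \<Rightarrow> 'a)
               \<Rightarrow> ('f, 'r) aform \<Rightarrow> real" where
  "feval FI RI s AOne = 1"
| "feval FI RI s (ADist t u) = dist (teval FI s t) (teval FI s u)"
| "feval FI RI s (ARel R ts) = RI R (map (teval FI s) ts)"
| "feval FI RI s (AScale c \<phi>) = c * feval FI RI s \<phi>"
| "feval FI RI s (AAdd \<phi> \<psi>) = feval FI RI s \<phi> + feval FI RI s \<psi>"
| "feval FI RI s (AInf i \<phi>) = (INF a. feval FI RI (s(i := a)) \<phi>)"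
| "feval FI RI s (ASup i \<phi>) = (SUP a. feval FI RI (s(i := a)) \<phi>)"

text \<open>Formulas in the variable x (= variable 0) and parameters a_1..a_n (= variables 1..n).\<close>
definition forms_n :: "('f \<Rightarrow> nat) \<Rightarrow> ('r \<Rightarrow> nat) \<Rightarrow> nat \<Rightarrow> ('f, 'r) aform set" where
  "forms_n fa ra n = {\<phi>. wf_form fa ra \<phi> \<and> ffv \<phi> \<subseteq> {..n}}"

abbreviation forms1 :: "('f \<Rightarrow> nat) \<Rightarrow> ('r \<Rightarrow> nat) \<Rightarrow> ('f, 'r) aform set" where
  "forms1 fa ra \<equiv> forms_n fa ra 0"

definition par_asg :: "'a \<Rightarrow> 'a list \<Rightarrow> nat \<Rightarrow> 'a" where
  "par_asg b as i = (if i = 0 then b else if i - 1 < length as then as ! (i - 1) else b)"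

text \<open>A 1-type over the tuple of parameters as (a finite subset of M), i.e. a type of the
  complete theory of (M, as): a positive linear functional with p(1) = 1.  Since the theory is
  that of M with the parameters named, T_as entails phi(x) \<ge> 0 iff phi(b, as) \<ge> 0 for all b in M.\<close>
definition is_type_over ::
  "('f \<Rightarrow> nat) \<Rightarrow> ('r \<Rightarrow> nat) \<Rightarrow> ('f \<Rightarrow> 'a::metric_space list \<Rightarrow> 'a) \<Rightarrow> ('r \<Rightarrow> 'a list \<Rightarrow> real)
     \<Rightarrow> 'a list \<Rightarrow> (('f, 'r) aform \<Rightarrow> real) \<Rightarrow> bool" where
  "is_type_over fa ra FI RI as p \<longleftrightarrow>
     p AOne = 1
   \<and> (\<forall>\<phi>\<in>forms_n fa ra (length as). \<forall>\<psi>\<in>forms_n fa ra (length as). p (AAdd \<phi> \<psi>) = p \<phi> + p \<psi>)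
   \<and> (\<forall>\<phi>\<in>forms_n fa ra (length as). \<forall>c. p (AScale c \<phi>) = c * p \<phi>)
   \<and> (\<forall>\<phi>\<in>forms_n fa ra (length as).
        (\<forall>b. 0 \<le> feval FI RI (par_asg b as) \<phi>) \<longrightarrow> 0 \<le> p \<phi>)"

abbreviation is_type1 where
  "is_type1 fa ra FI RI p \<equiv> is_type_over fa ra FI RI [] p"

definition realizes ::
  "('f \<Rightarrow> nat) \<Rightarrow> ('r \<Rightarrow> nat) \<Rightarrow> ('f \<Rightarrow> 'a::metric_space list \<Rightarrow> 'a) \<Rightarrow> ('r \<Rightarrow> 'a list \<Rightarrow> real)
     \<Rightarrow> 'a list \<Rightarrow> (('f, 'r) aform \<Rightarrow> real) \<Rightarrow> 'a \<Rightarrow> bool" where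
  "realizes fa ra FI RI as p b \<longleftrightarrow>
     (\<forall>\<phi>\<in>forms_n fa ra (length as). p \<phi> = feval FI RI (par_asg b as) \<phi>)"

definition aleph0_saturated ::
  "('f \<Rightarrow> nat) \<Rightarrow> ('r \<Rightarrow> nat) \<Rightarrow> ('f \<Rightarrow> 'a::metric_space list \<Rightarrow> 'a) \<Rightarrow> ('r \<Rightarrow> 'a list \<Rightarrow> real) \<Rightarrow> bool" where
  "aleph0_saturated fa ra FI RI \<longleftrightarrow>
     (\<forall>as p. is_type_over fa ra FI RI as p \<longrightarrow> (\<exists>b. realizes fa ra FI RI as p b))"

definition approx1 ::
  "('f \<Rightarrow> nat) \<Rightarrow> ('r \<Rightarrow> nat) \<Rightarrow> ('f \<Rightarrow> 'a::metric_space list \<Rightarrow> 'a) \<Rightarrow> ('r \<Rightarrow> 'a list \<Rightarrow> real)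
     \<Rightarrow> (nat \<Rightarrow> ('f, 'r) aform) \<Rightarrow> ('a \<Rightarrow> real) \<Rightarrow> bool" where
  "approx1 fa ra FI RI \<psi> P \<longleftrightarrow>
     (\<forall>k. \<psi> k \<in> forms1 fa ra)
   \<and> (\<forall>e>0. \<exists>N. \<forall>k\<ge>N. \<forall>x. \<bar>feval FI RI (\<lambda>_. x) (\<psi> k) - P x\<bar> \<le> e)"

text \<open>v is the value p(P) of the type p at the definable predicate P:
  P is definable and p(\<psi>_k) \<longrightarrow> v for every approximating sequence \<psi>_k.\<close>
definition type_ext_value ::
  "('f \<Rightarrow> nat) \<Rightarrow> ('r \<Rightarrow> nat) \<Rightarrow> ('f \<Rightarrow> 'a::metric_space list \<Rightarrow> 'a) \<Rightarrow> ('r \<Rightarrow> 'a list \<Rightarrow> real)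
     \<Rightarrow> (('f, 'r) aform \<Rightarrow> real) \<Rightarrow> ('a \<Rightarrow> real) \<Rightarrow> real \<Rightarrow> bool" where
  "type_ext_value fa ra FI RI p P v \<longleftrightarrow>
     (\<exists>\<psi>. approx1 fa ra FI RI \<psi> P)
   \<and> (\<forall>\<psi>. approx1 fa ra FI RI \<psi> P \<longrightarrow> (\<lambda>k. p (\<psi> k)) \<longlonglongrightarrow> v)"

definition definable_fun ::
  "('f \<Rightarrow> nat) \<Rightarrow> ('r \<Rightarrow> nat) \<Rightarrow> ('f \<Rightarrow> 'a::metric_space list \<Rightarrow> 'a) \<Rightarrow> ('r \<Rightarrow> 'a list \<Rightarrow> real)
     \<Rightarrow> ('a \<Rightarrow> 'a) \<Rightarrow> bool" where
  "definable_fun fa ra FI RI f \<longleftrightarrow>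
     (\<exists>\<phi>::nat \<Rightarrow> ('f, 'r) aform. (\<forall>k. \<phi> k \<in> forms_n fa ra 1)
        \<and> (\<forall>e>0. \<exists>N. \<forall>k\<ge>N. \<forall>x y.
              \<bar>feval FI RI (\<lambda>i::nat. if i = 0 then x else y) (\<phi> k) - dist (f x) y\<bar> \<le> e))"

end

theory Submission
  imports Defs
begin


lemma teval_cong: "(\<forall>i\<in>tfv t. s i = s' i) \<Longrightarrow> teval FI s t = teval FI s' t"
  by (induction t) (auto intro!: arg_cong[where f="FI _"])

lemma feval_cong: "(\<forall>i\<in>ffv \<phi>. s i = s' i) \<Longrightarrow> feval FI RI s \<phi> = feval FI RI s' \<phi>"
proof (induction \<phi> arbitrary: s s')
  case (ADist t u) then show ?case using teval_cong[of t s s' FI] teval_cong[of u s s' FI] by simp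
next
  case (ARel R ts)
  then have "map (teval FI s) ts = map (teval FI s') ts"
    by (auto intro!: teval_cong)
  then show ?case by (metis feval.simps(3))
next
  case (AInf i \<phi>)
  then have "\<And>a. feval FI RI (s(i:=a)) \<phi> = feval FI RI (s'(i:=a)) \<phi>" by (intro AInf.IH) auto
  then show ?case by simp
next
  case (ASup i \<phi>)
  then have "\<And>a. feval FI RI (s(i:=a)) \<phi> = feval FI RI (s'(i:=a)) \<phi>" by (intro ASup.IH) auto
  then show ?case by simp
next
  case (AAdd \<phi>1 \<phi>2)
  have "feval FI RI s \<phi>1 = feval FI RI s' \<phi>1" using AAdd.prems by (intro AAdd.IH(1)) auto
  moreover have "feval FI RI s \<phi>2 = feval FI RI s' \<phi>2" using AAdd.prems by (intro AAdd.IH(2)) auto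
  ultimately show ?case by simp
qed auto

lemma INF_diff:
  fixes f g :: "'a \<Rightarrow> real"
  assumes "bdd_below (range g)" "\<And>a. \<bar>f a - g a\<bar> \<le> c"
  shows "\<bar>(INF a. f a) - (INF a. g a)\<bar> \<le> c"
proof -
  obtain m where m: "\<And>a. m \<le> g a" using assms(1) unfolding bdd_below_def by auto
  have "m - c \<le> f a" for a using m[of a] assms(2)[of a] by (simp add: abs_le_iff)
  then have bf: "bdd_below (range f)" unfolding bdd_below_def by auto
  have "(INF a. f a) \<le> (INF a. g a) + c"
  proof -
    have "(INF a. f a) - c \<le> (INF a. g a)"
    proof (rule cINF_greatest)
      fix a show "(INF a. f a) - c \<le> g a" using cINF_lower[OF bf, of a] assms(2)[of a] by (simp add: abs_le_iff)
    qed simp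
    then show ?thesis by simp
  qed
  moreover have "(INF a. g a) \<le> (INF a. f a) + c"
  proof -
    have "(INF a. g a) - c \<le> (INF a. f a)"
    proof (rule cINF_greatest)
      fix a show "(INF a. g a) - c \<le> f a" using cINF_lower[OF assms(1), of a] assms(2)[of a] by (simp add: abs_le_iff)
    qed simp
    then show ?thesis by simp
  qed
  ultimately show ?thesis by linarith
qed

lemma SUP_diff:
  fixes f g :: "'a \<Rightarrow> real"
  assumes "bdd_above (range g)" "\<And>a. \<bar>f a - g a\<bar> \<le> c"
  shows "\<bar>(SUP a. f a) - (SUP a. g a)\<bar> \<le> c"
proof -
  obtain m where m: "\<And>a. g a \<le> m" using assms(1) unfolding bdd_above_def by auto
  have "f a \<le> m + c" for a using m[of a] assms(2)[of a] by (simp add: abs_le_iff)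
  then have bf: "bdd_above (range f)" unfolding bdd_above_def by auto
  have "(SUP a. f a) \<le> (SUP a. g a) + c"
  proof -
    have "(SUP a. f a) \<le> (SUP a. g a) + c"
    proof (rule cSUP_least)
      fix a show "f a \<le> (SUP a. g a) + c" using cSUP_upper[OF _ assms(1), of a] assms(2)[of a] by (simp add: abs_le_iff)
    qed simp
    then show ?thesis by simp
  qed
  moreover have "(SUP a. g a) \<le> (SUP a. f a) + c"
  proof (rule cSUP_least)
    fix a show "g a \<le> (SUP a. f a) + c" using cSUP_upper[OF _ bf, of a] assms(2)[of a] by (simp add: abs_le_iff)
  qed simp
  ultimately show ?thesis by linarith
qed

lemma INF_bound:
  fixes h :: "'a \<Rightarrow> real"
  assumes "\<And>a. \<bar>h a\<bar> \<le> B"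
  shows "\<bar>INF a. h a\<bar> \<le> B"
proof -
  have hb: "-B \<le> h a" for a using assms[of a] by (simp add: abs_le_iff)
  then have bb: "bdd_below (range h)" by (intro bdd_belowI2)
  have "-B \<le> (INF a. h a)" by (rule cINF_greatest) (use hb in auto)
  moreover have "(INF a. h a) \<le> B" using cINF_lower[OF bb, of undefined] assms[of undefined] by (simp add: abs_le_iff)
  ultimately show ?thesis by simp
qed

lemma SUP_bound:
  fixes h :: "'a \<Rightarrow> real"
  assumes "\<And>a. \<bar>h a\<bar> \<le> B"
  shows "\<bar>SUP a. h a\<bar> \<le> B"
proof -
  have "h a \<le> B" for a using assms[of a] by (simp add: abs_le_iff)
  then have bb: "bdd_above (range h)" by (intro bdd_aboveI2)
  have "(SUP a. h a) \<le> B" by (rule cSUP_least) (use assms in \<open>auto simp: abs_le_iff\<close>)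
  moreover have "-B \<le> (SUP a. h a)" using cSUP_upper[OF _ bb, of undefined] assms[of undefined] by (simp add: abs_le_iff)
  ultimately show ?thesis by simp
qed

lemma feval_bounded:
  assumes S: "is_structure fa ra FI RI" and "wf_form fa ra \<phi>"
  shows "\<exists>B. \<forall>s. \<bar>feval FI RI s \<phi>\<bar> \<le> B"
  using assms(2)
proof (induction \<phi>)
  case AOne then show ?case by auto
next
  case (ADist t u)
  have "\<bar>feval FI RI s (ADist t u)\<bar> \<le> 1" for s using S unfolding is_structure_def by simp
  then show ?case by blast
next
  case (ARel R ts)
  have "\<bar>feval FI RI s (ARel R ts)\<bar> \<le> 1" for s using S ARel.prems unfolding is_structure_def by simp
  then show ?case by blast
next
  case (AScale c \<phi>)
  then obtain B where B: "\<And>s. \<bar>feval FI RI s \<phi>\<bar> \<le> B" by auto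
  have "\<bar>feval FI RI s (AScale c \<phi>)\<bar> \<le> \<bar>c\<bar> * B" for s
    using B[of s] by (simp add: abs_mult mult_left_mono)
  then show ?case by blast
next
  case (AAdd \<phi> \<psi>)
  then obtain B1 B2 where B: "\<And>s. \<bar>feval FI RI s \<phi>\<bar> \<le> B1" "\<And>s. \<bar>feval FI RI s \<psi>\<bar> \<le> B2" by auto
  have "\<bar>feval FI RI s (AAdd \<phi> \<psi>)\<bar> \<le> B1 + B2" for s
    using B(1)[of s] B(2)[of s] by simp
  then show ?case by blast
next
  case (AInf i \<phi>)
  then obtain B where B: "\<And>s. \<bar>feval FI RI s \<phi>\<bar> \<le> B" by auto
  have "\<bar>feval FI RI s (AInf i \<phi>)\<bar> \<le> B" for s
    by (simp, rule INF_bound, rule B)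
  then show ?case by blast
next
  case (ASup i \<phi>)
  then obtain B where B: "\<And>s. \<bar>feval FI RI s \<phi>\<bar> \<le> B" by auto
  have "\<bar>feval FI RI s (ASup i \<phi>)\<bar> \<le> B" for s
    by (simp, rule SUP_bound, rule B)
  then show ?case by blast
qed



lemma common_bound:
  fixes Q :: "'t \<Rightarrow> real \<Rightarrow> bool"
  assumes "\<forall>t\<in>set ts. \<exists>L\<ge>0. Q t L" "\<And>t L L'. Q t L \<Longrightarrow> L \<le> L' \<Longrightarrow> Q t L'"
  shows "\<exists>L\<ge>0. \<forall>t\<in>set ts. Q t L"
  using assms(1)
proof (induction ts)
  case Nil then show ?case by auto
next
  case (Cons a ts)
  then obtain L1 L2 where l: "L1 \<ge> 0" "Q a L1" "L2 \<ge> 0" "\<forall>t\<in>set ts. Q t L2" by auto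
  have "Q a (max L1 L2)" by (rule assms(2)[OF l(2)]) simp
  moreover have "Q t (max L1 L2)" if "t \<in> set ts" for t by (rule assms(2)[OF l(4)[rule_format, OF that]]) simp
  ultimately have "\<forall>t\<in>set (a # ts). Q t (max L1 L2)" by auto
  then show ?case using \<open>L1 \<ge> 0\<close> by (intro exI[of _ "max L1 L2"]) auto
qed

definition tlip :: "('f \<Rightarrow> 'a::metric_space list \<Rightarrow> 'a) \<Rightarrow> 'f aterm \<Rightarrow> real \<Rightarrow> bool" where
  "tlip FI t L \<longleftrightarrow> (\<forall>(s::nat \<Rightarrow> 'a) s' d. (\<forall>i. dist (s i) (s' i) \<le> d) \<longrightarrow> dist (teval FI s t) (teval FI s' t) \<le> L * d)"

lemma tlip_mono:
  fixes FI :: "'f \<Rightarrow> 'a::metric_space list \<Rightarrow> 'a"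
  assumes "tlip FI t L" "L \<le> L'" shows "tlip FI t L'"
  unfolding tlip_def
proof (intro allI impI)
  fix s s' :: "nat \<Rightarrow> 'a" and d assume h: "\<forall>i. dist (s i) (s' i) \<le> d"
  have "dist (s 0) (s' 0) \<le> d" using h by blast
  then have d0: "0 \<le> d" using order_trans[OF zero_le_dist] by blast
  have "dist (teval FI s t) (teval FI s' t) \<le> L * d" using assms(1) h unfolding tlip_def by blast
  then show "dist (teval FI s t) (teval FI s' t) \<le> L' * d" using order_trans[OF _ mult_right_mono[OF assms(2) d0]] by blast
qed

lemma list_lip:
  fixes xs ys :: "'a::metric_space list"
  assumes "length xs = n" "length ys = n" "\<And>i. i < n \<Longrightarrow> dist (xs ! i) (ys ! i) \<le> e"
  shows "(\<Sum>i<n. dist (xs ! i) (ys ! i)) \<le> real n * e"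
proof -
  have "(\<Sum>i<n. dist (xs ! i) (ys ! i)) \<le> (\<Sum>i<n. e)" by (rule sum_mono) (use assms in auto)
  then show ?thesis by simp
qed

lemma term_lip:
  fixes FI :: "'f \<Rightarrow> 'a::complete_space list \<Rightarrow> 'a"
  assumes S: "is_structure fa ra FI RI" and "wf_term fa t"
  shows "\<exists>L\<ge>0. tlip FI t L"
  using assms(2)
proof (induction t)
  case (AVar i)
  show ?case by (rule exI[of _ 1]) (auto simp: tlip_def)
next
  case (AFn g ts)
  have hL: "\<forall>t\<in>set ts. \<exists>L\<ge>0. tlip FI t L" using AFn by auto
  have "\<exists>L\<ge>0. \<forall>t\<in>set ts. tlip FI t L"
    apply (rule common_bound)
     apply (rule hL)
    apply (erule tlip_mono)
    apply assumption
    done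
  then obtain L0 where L0: "L0 \<ge> 0" "\<forall>t\<in>set ts. tlip FI t L0" by blast
  have "lipschitz_list (fa g) (FI g)" using S unfolding is_structure_def by blast
  then obtain C where C: "\<forall>xs ys. length xs = fa g \<longrightarrow> length ys = fa g \<longrightarrow>
      dist (FI g xs) (FI g ys) \<le> C * (\<Sum>i<fa g. dist (xs ! i) (ys ! i))"
    unfolding lipschitz_list_def by blast
  have "tlip FI (AFn g ts) (max C 0 * (real (fa g) * L0))"
    unfolding tlip_def
  proof (intro allI impI)
    fix s s' :: "nat \<Rightarrow> 'a" and d assume h: "\<forall>i. dist (s i) (s' i) \<le> d"
    have "dist (s 0) (s' 0) \<le> d" using h by blast
    then have d0: "0 \<le> d" using order_trans[OF zero_le_dist] by blast
    let ?xs = "map (teval FI s) ts" and ?ys = "map (teval FI s') ts"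
    have len: "length ?xs = fa g" "length ?ys = fa g" using AFn.prems by auto
    have "\<And>i. i < fa g \<Longrightarrow> dist (?xs ! i) (?ys ! i) \<le> L0 * d"
    proof -
      fix i assume "i < fa g"
      then have "ts ! i \<in> set ts" "i < length ts" using len by auto
      then have "tlip FI (ts ! i) L0" using L0(2) by blast
      then have "dist (teval FI s (ts ! i)) (teval FI s' (ts ! i)) \<le> L0 * d" using h unfolding tlip_def by blast
      then show "dist (?xs ! i) (?ys ! i) \<le> L0 * d" using \<open>i < length ts\<close> by simp
    qed
    from list_lip[OF len this] have sm: "(\<Sum>i<fa g. dist (?xs ! i) (?ys ! i)) \<le> real (fa g) * (L0 * d)" .
    have s0: "0 \<le> (\<Sum>i<fa g. dist (?xs ! i) (?ys ! i))" by (rule sum_nonneg) auto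
    have "dist (FI g ?xs) (FI g ?ys) \<le> C * (\<Sum>i<fa g. dist (?xs ! i) (?ys ! i))" using C[rule_format, OF len] .
    also have "\<dots> \<le> max C 0 * (\<Sum>i<fa g. dist (?xs ! i) (?ys ! i))" using s0 by (simp add: mult_right_mono)
    also have "\<dots> \<le> max C 0 * (real (fa g) * (L0 * d))" using sm by (simp add: mult_left_mono)
    finally show "dist (teval FI s (AFn g ts)) (teval FI s' (AFn g ts)) \<le> max C 0 * (real (fa g) * L0) * d"
      by (simp add: mult.assoc)
  qed
  then show ?case using L0 by (intro exI[of _ "max C 0 * (real (fa g) * L0)"]) auto
qed


lemma dist_diff_le:
  fixes a b a' b' :: "'a::metric_space"
  shows "\<bar>dist a b - dist a' b'\<bar> \<le> dist a a' + dist b b'"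
proof -
  have "dist a b \<le> dist a a' + dist a' b" by (rule dist_triangle)
  moreover have "dist a' b \<le> dist a' b' + dist b' b" by (rule dist_triangle)
  moreover have "dist a' b' \<le> dist a' a + dist a b'" by (rule dist_triangle)
  moreover have "dist a b' \<le> dist a b + dist b b'" by (rule dist_triangle)
  ultimately show ?thesis by (simp add: dist_commute abs_le_iff)
qed

definition flip :: "('f \<Rightarrow> 'a::metric_space list \<Rightarrow> 'a) \<Rightarrow> ('r \<Rightarrow> 'a list \<Rightarrow> real) \<Rightarrow> ('f,'r) aform \<Rightarrow> real \<Rightarrow> bool" where
  "flip FI RI \<phi> L \<longleftrightarrow> (\<forall>(s::nat \<Rightarrow> 'a) s' d. (\<forall>i. dist (s i) (s' i) \<le> d) \<longrightarrow> \<bar>feval FI RI s \<phi> - feval FI RI s' \<phi>\<bar> \<le> L * d)"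

lemma d_nonneg: "\<forall>i::nat. dist (s i) (s' i) \<le> d \<Longrightarrow> 0 \<le> (d::real)"
proof -
  assume h: "\<forall>i. dist (s i) (s' i) \<le> d"
  have "dist (s 0) (s' 0) \<le> d" using h by blast
  then show ?thesis using order_trans[OF zero_le_dist] by blast
qed

lemma form_lip:
  fixes FI :: "'f \<Rightarrow> 'a::complete_space list \<Rightarrow> 'a"
  assumes S: "is_structure fa ra FI RI" and "wf_form fa ra \<phi>"
  shows "\<exists>L\<ge>0. flip FI RI \<phi> L"
  using assms(2)
proof (induction \<phi>)
  case AOne
  show ?case by (rule exI[of _ 0]) (simp add: flip_def)
next
  case (ADist t u)
  obtain L1 where L1: "L1 \<ge> 0" "tlip FI t L1" using term_lip[OF S] ADist by auto
  obtain L2 where L2: "L2 \<ge> 0" "tlip FI u L2" using term_lip[OF S] ADist by auto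
  have "flip FI RI (ADist t u) (L1 + L2)"
    unfolding flip_def
  proof (intro allI impI)
    fix s s' :: "nat \<Rightarrow> 'a" and d assume h: "\<forall>i. dist (s i) (s' i) \<le> d"
    have "dist (teval FI s t) (teval FI s' t) \<le> L1 * d" using L1(2) h unfolding tlip_def by blast
    moreover have "dist (teval FI s u) (teval FI s' u) \<le> L2 * d" using L2(2) h unfolding tlip_def by blast
    ultimately show "\<bar>feval FI RI s (ADist t u) - feval FI RI s' (ADist t u)\<bar> \<le> (L1 + L2) * d"
      using dist_diff_le[of "teval FI s t" "teval FI s u" "teval FI s' t" "teval FI s' u"]
      by (simp add: distrib_right)
  qed
  then show ?case using L1 L2 by (intro exI[of _ "L1 + L2"]) auto
next
  case (ARel R ts)
  have hL: "\<forall>t\<in>set ts. \<exists>L\<ge>0. tlip FI t L" using ARel term_lip[OF S] by auto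
  have "\<exists>L\<ge>0. \<forall>t\<in>set ts. tlip FI t L"
    apply (rule common_bound)
     apply (rule hL)
    apply (erule tlip_mono)
    apply assumption
    done
  then obtain L0 where L0: "L0 \<ge> 0" "\<forall>t\<in>set ts. tlip FI t L0" by blast
  have "lipschitz_list (ra R) (RI R)" using S unfolding is_structure_def by blast
  then obtain C where C: "\<forall>xs ys. length xs = ra R \<longrightarrow> length ys = ra R \<longrightarrow>
      dist (RI R xs) (RI R ys) \<le> C * (\<Sum>i<ra R. dist (xs ! i) (ys ! i))"
    unfolding lipschitz_list_def by blast
  have "flip FI RI (ARel R ts) (max C 0 * (real (ra R) * L0))"
    unfolding flip_def
  proof (intro allI impI)
    fix s s' :: "nat \<Rightarrow> 'a" and d assume h: "\<forall>i. dist (s i) (s' i) \<le> d"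
    let ?xs = "map (teval FI s) ts" and ?ys = "map (teval FI s') ts"
    have len: "length ?xs = ra R" "length ?ys = ra R" using ARel.prems by auto
    have "\<And>i. i < ra R \<Longrightarrow> dist (?xs ! i) (?ys ! i) \<le> L0 * d"
    proof -
      fix i assume "i < ra R"
      then have "ts ! i \<in> set ts" "i < length ts" using len by auto
      then have "tlip FI (ts ! i) L0" using L0(2) by blast
      then have "dist (teval FI s (ts ! i)) (teval FI s' (ts ! i)) \<le> L0 * d" using h unfolding tlip_def by blast
      then show "dist (?xs ! i) (?ys ! i) \<le> L0 * d" using \<open>i < length ts\<close> by simp
    qed
    from list_lip[OF len this] have sm: "(\<Sum>i<ra R. dist (?xs ! i) (?ys ! i)) \<le> real (ra R) * (L0 * d)" .
    have s0: "0 \<le> (\<Sum>i<ra R. dist (?xs ! i) (?ys ! i))" by (rule sum_nonneg) auto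
    have "dist (RI R ?xs) (RI R ?ys) \<le> C * (\<Sum>i<ra R. dist (?xs ! i) (?ys ! i))" using C[rule_format, OF len] .
    also have "\<dots> \<le> max C 0 * (\<Sum>i<ra R. dist (?xs ! i) (?ys ! i))" using s0 by (simp add: mult_right_mono)
    also have "\<dots> \<le> max C 0 * (real (ra R) * (L0 * d))" using sm by (simp add: mult_left_mono)
    finally show "\<bar>feval FI RI s (ARel R ts) - feval FI RI s' (ARel R ts)\<bar> \<le> max C 0 * (real (ra R) * L0) * d"
      by (simp add: mult.assoc dist_real_def)
  qed
  then show ?case using L0 by (intro exI[of _ "max C 0 * (real (ra R) * L0)"]) auto
next
  case (AScale c \<phi>)
  then obtain L where L: "L \<ge> 0" "flip FI RI \<phi> L" by auto
  have "flip FI RI (AScale c \<phi>) (\<bar>c\<bar> * L)"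
    unfolding flip_def
  proof (intro allI impI)
    fix s s' :: "nat \<Rightarrow> 'a" and d assume h: "\<forall>i. dist (s i) (s' i) \<le> d"
    have "\<bar>feval FI RI s \<phi> - feval FI RI s' \<phi>\<bar> \<le> L * d" using L(2) h unfolding flip_def by blast
    then have "\<bar>c\<bar> * \<bar>feval FI RI s \<phi> - feval FI RI s' \<phi>\<bar> \<le> \<bar>c\<bar> * (L * d)" by (simp add: mult_left_mono)
    then show "\<bar>feval FI RI s (AScale c \<phi>) - feval FI RI s' (AScale c \<phi>)\<bar> \<le> \<bar>c\<bar> * L * d"
      by (simp add: abs_mult right_diff_distrib[symmetric] mult.assoc)
  qed
  then show ?case using L by (intro exI[of _ "\<bar>c\<bar> * L"]) auto
next
  case (AAdd \<phi> \<psi>)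
  then obtain L1 L2 where L: "L1 \<ge> 0" "flip FI RI \<phi> L1" "L2 \<ge> 0" "flip FI RI \<psi> L2" by auto
  have "flip FI RI (AAdd \<phi> \<psi>) (L1 + L2)"
    unfolding flip_def
  proof (intro allI impI)
    fix s s' :: "nat \<Rightarrow> 'a" and d assume h: "\<forall>i. dist (s i) (s' i) \<le> d"
    have "\<bar>feval FI RI s \<phi> - feval FI RI s' \<phi>\<bar> \<le> L1 * d" using L(2) h unfolding flip_def by blast
    moreover have "\<bar>feval FI RI s \<psi> - feval FI RI s' \<psi>\<bar> \<le> L2 * d" using L(4) h unfolding flip_def by blast
    ultimately show "\<bar>feval FI RI s (AAdd \<phi> \<psi>) - feval FI RI s' (AAdd \<phi> \<psi>)\<bar> \<le> (L1 + L2) * d"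
      by (simp add: distrib_right)
  qed
  then show ?case using L by (intro exI[of _ "L1 + L2"]) auto
next
  case (AInf i \<phi>)
  then obtain L where L: "L \<ge> 0" "flip FI RI \<phi> L" by auto
  obtain B where B: "\<And>s. \<bar>feval FI RI s \<phi>\<bar> \<le> B" using feval_bounded[OF S] AInf.prems by auto
  have "flip FI RI (AInf i \<phi>) L"
    unfolding flip_def
  proof (intro allI impI)
    fix s s' :: "nat \<Rightarrow> 'a" and d assume h: "\<forall>i. dist (s i) (s' i) \<le> d"
    have d0: "0 \<le> d" using d_nonneg[OF h] .
    have pw: "\<bar>feval FI RI (s(i:=a)) \<phi> - feval FI RI (s'(i:=a)) \<phi>\<bar> \<le> L * d" for a
    proof -
      have "\<forall>j. dist ((s(i:=a)) j) ((s'(i:=a)) j) \<le> d" using h d0 by simp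
      then show ?thesis using L(2) unfolding flip_def by blast
    qed
    have bd: "bdd_below (range (\<lambda>a. feval FI RI (s'(i:=a)) \<phi>))"
    proof -
      have "-B \<le> feval FI RI (s'(i:=a)) \<phi>" for a using B[of "s'(i:=a)"] by (simp add: abs_le_iff)
      then show ?thesis by (intro bdd_belowI2)
    qed
    have "\<bar>(INF a. feval FI RI (s(i:=a)) \<phi>) - (INF a. feval FI RI (s'(i:=a)) \<phi>)\<bar> \<le> L * d"
      by (rule INF_diff[OF bd pw])
    then show "\<bar>feval FI RI s (AInf i \<phi>) - feval FI RI s' (AInf i \<phi>)\<bar> \<le> L * d"
      by simp
  qed
  then show ?case using L by blast
next
  case (ASup i \<phi>)
  then obtain L where L: "L \<ge> 0" "flip FI RI \<phi> L" by auto
  obtain B where B: "\<And>s. \<bar>feval FI RI s \<phi>\<bar> \<le> B" using feval_bounded[OF S] ASup.prems by auto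
  have "flip FI RI (ASup i \<phi>) L"
    unfolding flip_def
  proof (intro allI impI)
    fix s s' :: "nat \<Rightarrow> 'a" and d assume h: "\<forall>i. dist (s i) (s' i) \<le> d"
    have d0: "0 \<le> d" using d_nonneg[OF h] .
    have pw: "\<bar>feval FI RI (s(i:=a)) \<phi> - feval FI RI (s'(i:=a)) \<phi>\<bar> \<le> L * d" for a
    proof -
      have "\<forall>j. dist ((s(i:=a)) j) ((s'(i:=a)) j) \<le> d" using h d0 by simp
      then show ?thesis using L(2) unfolding flip_def by blast
    qed
    have bd: "bdd_above (range (\<lambda>a. feval FI RI (s'(i:=a)) \<phi>))"
    proof -
      have "feval FI RI (s'(i:=a)) \<phi> \<le> B" for a using B[of "s'(i:=a)"] by (simp add: abs_le_iff)
      then show ?thesis by (intro bdd_aboveI2)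
    qed
    have "\<bar>(SUP a. feval FI RI (s(i:=a)) \<phi>) - (SUP a. feval FI RI (s'(i:=a)) \<phi>)\<bar> \<le> L * d"
      by (rule SUP_diff[OF bd pw])
    then show "\<bar>feval FI RI s (ASup i \<phi>) - feval FI RI s' (ASup i \<phi>)\<bar> \<le> L * d"
      by simp
  qed
  then show ?case using L by blast
qed


definition sw :: "nat \<Rightarrow> nat" where "sw i = (if i = 0 then 1 else if i = 1 then 0 else i)"

lemma sw_sw[simp]: "sw (sw i) = i" by (simp add: sw_def)
lemma sw_inj: "inj sw" by (metis injI sw_sw)
lemma sw_0[simp]: "sw 0 = 1" and sw_1[simp]: "sw 1 = 0" by (simp_all add: sw_def)

fun trn :: "'f aterm \<Rightarrow> 'f aterm" where
  "trn (AVar i) = AVar (sw i)"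
| "trn (AFn g ts) = AFn g (map trn ts)"

fun frn :: "('f,'r) aform \<Rightarrow> ('f,'r) aform" where
  "frn AOne = AOne"
| "frn (ADist t u) = ADist (trn t) (trn u)"
| "frn (ARel R ts) = ARel R (map trn ts)"
| "frn (AScale c \<phi>) = AScale c (frn \<phi>)"
| "frn (AAdd \<phi> \<psi>) = AAdd (frn \<phi>) (frn \<psi>)"
| "frn (AInf i \<phi>) = AInf (sw i) (frn \<phi>)"
| "frn (ASup i \<phi>) = ASup (sw i) (frn \<phi>)"

lemma teval_trn: "teval FI s (trn t) = teval FI (s \<circ> sw) t"
proof (induction t)
  case (AFn g ts)
  have "map (teval FI s) (map trn ts) = map (teval FI (s \<circ> sw)) ts"
    unfolding map_map by (rule map_cong) (use AFn in \<open>auto simp: comp_def\<close>)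
  then show ?case by (metis teval.simps(2) trn.simps(2))
qed simp

lemma upd_sw: "(s(sw i := a)) \<circ> sw = (s \<circ> sw)(i := a)"
  by (rule ext) (metis comp_apply fun_upd_apply sw_sw)

lemma feval_frn: "feval FI RI s (frn \<phi>) = feval FI RI (s \<circ> sw) \<phi>"
proof (induction \<phi> arbitrary: s)
  case (ARel R ts)
  have "map (teval FI s) (map trn ts) = map (teval FI (s \<circ> sw)) ts"
    unfolding map_map by (rule map_cong) (auto simp: teval_trn)
  then show ?case by (metis feval.simps(3) frn.simps(3))
qed (simp_all add: teval_trn upd_sw)

lemma wf_trn: "wf_term fa (trn t) = wf_term fa t"
  by (induction t) auto

lemma wf_frn: "wf_form fa ra (frn \<phi>) = wf_form fa ra \<phi>"
  by (induction \<phi>) (auto simp: wf_trn)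

lemma tfv_trn: "tfv (trn t) = sw ` tfv t"
  by (induction t) auto

lemma ffv_frn: "ffv (frn \<phi>) = sw ` ffv \<phi>"
  by (induction \<phi>) (auto simp: tfv_trn image_set_diff[OF sw_inj] image_Un image_UN)


lemma flipD: "flip FI RI \<phi> L \<Longrightarrow> (\<forall>i. dist (s i) (s' i) \<le> d) \<Longrightarrow> \<bar>feval FI RI s \<phi> - feval FI RI s' \<phi>\<bar> \<le> L * d"
  unfolding flip_def by blast

lemma comp_definable:
  fixes FI :: "'f \<Rightarrow> 'a::complete_space list \<Rightarrow> 'a" and RI :: "'r \<Rightarrow> 'a list \<Rightarrow> real" and ra :: "'r \<Rightarrow> nat"
  assumes S: "is_structure fa ra FI RI" and D: "definable_fun fa ra FI RI f"
    and phi: "\<phi> \<in> forms1 fa ra"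
  shows "\<exists>\<psi>. approx1 fa ra FI RI \<psi> (\<lambda>x. feval FI RI (\<lambda>_. f x) \<phi>)"
proof -
  obtain ch :: "nat \<Rightarrow> ('f,'r) aform" where chi: "\<forall>k. ch k \<in> forms_n fa ra 1"
    "\<forall>e>0. \<exists>N. \<forall>k\<ge>N. \<forall>x y. \<bar>feval FI RI (\<lambda>i::nat. if i = 0 then x else y) (ch k) - dist (f x) y\<bar> \<le> e"
    using D unfolding definable_fun_def by blast
  have wf: "wf_form fa ra \<phi>" and fv: "ffv \<phi> \<subseteq> {0}" using phi unfolding forms_n_def by auto
  obtain L where L: "L \<ge> 0" "flip FI RI \<phi> L" using form_lip[OF S wf] by auto
  define \<theta> where "\<theta> k = AInf 1 (AAdd (frn \<phi>) (AScale L (ch k)))" for k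
  have th_in: "\<theta> k \<in> forms1 fa ra" for k
  proof -
    have "wf_form fa ra (ch k)" "ffv (ch k) \<subseteq> {..1}" using chi(1) unfolding forms_n_def by auto
    moreover have "ffv (frn \<phi>) \<subseteq> {1}" using fv by (auto simp: ffv_frn)
    ultimately show ?thesis using wf unfolding \<theta>_def forms_n_def by (auto simp: wf_frn)
  qed
  define P where "P x = feval FI RI (\<lambda>_. f x) \<phi>" for x
  define G where "G x a = feval FI RI (\<lambda>_. a) \<phi> + L * dist (f x) a" for x a
  have Glow: "P x \<le> G x a" for x a
  proof -
    have "\<bar>feval FI RI (\<lambda>_. a) \<phi> - feval FI RI (\<lambda>_. f x) \<phi>\<bar> \<le> L * dist a (f x)"
      by (rule flipD[OF L(2)]) simp
    then show ?thesis unfolding P_def G_def by (simp add: dist_commute abs_le_iff)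
  qed
  have Gbdd: "bdd_below (range (G x))" for x using Glow by (intro bdd_belowI2) 
  have PG: "P x = (INF a. G x a)" for x
  proof (rule antisym)
    show "P x \<le> (INF a. G x a)" by (rule cINF_greatest) (auto intro: Glow)
    have "(INF a. G x a) \<le> G x (f x)" by (rule cINF_lower[OF Gbdd]) simp
    also have "G x (f x) = P x" unfolding G_def P_def by simp
    finally show "(INF a. G x a) \<le> P x" .
  qed
  have th_eval: "feval FI RI (\<lambda>_. x) (\<theta> k) = (INF a. feval FI RI (\<lambda>_. a) \<phi> + L * feval FI RI (\<lambda>i::nat. if i = 0 then x else a) (ch k))" for x k
  proof -
    have 1: "feval FI RI (((\<lambda>_. x)(1 := a)) \<circ> sw) \<phi> = feval FI RI (\<lambda>_. a) \<phi>" for a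
      by (rule feval_cong) (use fv in auto)
    have 2: "feval FI RI ((\<lambda>_. x)(1 := a)) (ch k) = feval FI RI (\<lambda>i::nat. if i = 0 then x else a) (ch k)" for a
    proof (rule feval_cong)
      have "ffv (ch k) \<subseteq> {..1}" using chi(1) unfolding forms_n_def by auto
      then show "\<forall>i\<in>ffv (ch k). ((\<lambda>_. x)(1 := a)) i = (if i = 0 then x else a)" by auto
    qed
    show ?thesis by (simp only: \<theta>_def feval.simps feval_frn 1 2)
  qed
  have approx: "\<bar>feval FI RI (\<lambda>_. x) (\<theta> k) - P x\<bar> \<le> L * e"
    if "\<forall>y. \<bar>feval FI RI (\<lambda>i::nat. if i = 0 then x else y) (ch k) - dist (f x) y\<bar> \<le> e" for x k e
  proof -
    have "\<bar>(INF a. feval FI RI (\<lambda>_. a) \<phi> + L * feval FI RI (\<lambda>i::nat. if i = 0 then x else a) (ch k)) - (INF a. G x a)\<bar> \<le> L * e"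
    proof (rule INF_diff[OF Gbdd])
      fix a
      have "\<bar>L * feval FI RI (\<lambda>i::nat. if i = 0 then x else a) (ch k) - L * dist (f x) a\<bar> \<le> L * e"
        using that[rule_format, of a] L(1) by (simp add: right_diff_distrib[symmetric] abs_mult mult_left_mono)
      then show "\<bar>feval FI RI (\<lambda>_. a) \<phi> + L * feval FI RI (\<lambda>i::nat. if i = 0 then x else a) (ch k) - G x a\<bar> \<le> L * e"
        unfolding G_def by simp
    qed
    then show ?thesis using th_eval PG by simp
  qed
  have "approx1 fa ra FI RI \<theta> P"
    unfolding approx1_def
  proof (intro conjI allI impI)
    fix k show "\<theta> k \<in> forms1 fa ra" by (rule th_in)
  next
    fix \<epsilon> :: real assume "\<epsilon> > 0"
    then have "\<epsilon> / (L + 1) > 0" using L(1) by simp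
    then obtain N where N: "\<forall>k\<ge>N. \<forall>x y. \<bar>feval FI RI (\<lambda>i::nat. if i = 0 then x else y) (ch k) - dist (f x) y\<bar> \<le> \<epsilon> / (L + 1)"
      using chi(2) by blast
    have "L * (\<epsilon> / (L + 1)) \<le> \<epsilon>" using L(1) \<open>\<epsilon> > 0\<close> by (simp add: field_simps)
    then show "\<exists>N. \<forall>k\<ge>N. \<forall>x. \<bar>feval FI RI (\<lambda>_. x) (\<theta> k) - P x\<bar> \<le> \<epsilon>"
      using N approx by (meson order_trans)
  qed
  then show ?thesis unfolding P_def by blast
qed


lemma eval_tendsto_nhds:
  fixes q :: "'b \<Rightarrow> real"
  shows "((\<lambda>g. g \<phi>) \<longlongrightarrow> q \<phi>) (nhds q)"
proof (rule topological_tendstoI)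
  fix S :: "real set" assume "open S" "q \<phi> \<in> S"
  have "open ((\<lambda>g::'b \<Rightarrow> real. g \<phi>) -` S)" by (rule open_vimage[OF \<open>open S\<close>]) simp
  then show "eventually (\<lambda>g. g \<phi> \<in> S) (nhds q)"
    unfolding eventually_nhds using \<open>q \<phi> \<in> S\<close> by (intro exI[of _ "(\<lambda>g::'b \<Rightarrow> real. g \<phi>) -` S"]) auto
qed

lemma cluster_exists:
  fixes av :: "nat \<Rightarrow> 'b \<Rightarrow> real" and Bd :: "'b \<Rightarrow> real"
  assumes "\<And>n \<phi>. \<bar>av n \<phi>\<bar> \<le> Bd \<phi>"
  shows "\<exists>q. inf (nhds q) (filtermap av sequentially) \<noteq> bot"
proof -
  define K where "K = PiE UNIV (\<lambda>\<phi>. {- Bd \<phi> .. Bd \<phi>})"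
  have "compactin (product_topology (\<lambda>_. euclidean) UNIV) K"
    unfolding K_def compactin_PiE by auto
  then have cK: "compact K" by (simp add: euclidean_product_topology)
  have "filtermap av sequentially \<noteq> bot" by (simp add: filtermap_bot_iff)
  moreover have "eventually (\<lambda>g. g \<in> K) (filtermap av sequentially)"
  proof -
    have "av n \<in> K" for n unfolding K_def
    proof (simp add: PiE_iff, intro allI)
      fix \<phi> show "- Bd \<phi> \<le> av n \<phi> \<and> av n \<phi> \<le> Bd \<phi>" using assms[of n \<phi>] by linarith
    qed
    then show ?thesis unfolding eventually_filtermap by simp
  qed
  ultimately show ?thesis using cK unfolding compact_filter by blast
qed


lemma avg_bound:
  fixes h :: "nat \<Rightarrow> real"
  assumes "\<And>i. \<bar>h i\<bar> \<le> B"
  shows "\<bar>(\<Sum>i<Suc n. h i) / real (Suc n)\<bar> \<le> \<bar>B\<bar>"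
proof -
  have "\<bar>\<Sum>i<Suc n. h i\<bar> \<le> (\<Sum>i<Suc n. \<bar>h i\<bar>)" by (rule sum_abs)
  also have "\<dots> \<le> (\<Sum>i<Suc n. \<bar>B\<bar>)" by (rule sum_mono) (rule order_trans[OF assms abs_ge_self])
  also have "\<dots> = real (Suc n) * \<bar>B\<bar>" by simp
  finally have "\<bar>\<Sum>i<Suc n. h i\<bar> \<le> real (Suc n) * \<bar>B\<bar>" .
  then show ?thesis by (simp add: divide_le_eq mult.commute)
qed

lemma telescope_bound:
  fixes h hp :: "nat \<Rightarrow> real"
  assumes "\<And>i. \<bar>hp i - h (Suc i)\<bar> \<le> e" "\<And>i. \<bar>h i\<bar> \<le> B"
  shows "\<bar>(\<Sum>i<Suc n. hp i) / real (Suc n) - (\<Sum>i<Suc n. h i) / real (Suc n)\<bar> \<le> e + 2 * B * inverse (real (Suc n))"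
proof -
  let ?m = "Suc n"
  have t: "h ?m - h 0 = (\<Sum>i<?m. h (Suc i)) - (\<Sum>i<?m. h i)"
    using sum_lessThan_telescope[of h ?m] by (simp add: sum_subtractf)
  have u: "(\<Sum>i<?m. hp i - h (Suc i)) = (\<Sum>i<?m. hp i) - (\<Sum>i<?m. h (Suc i))" by (simp add: sum_subtractf)
  have "\<bar>\<Sum>i<?m. hp i - h (Suc i)\<bar> \<le> (\<Sum>i<?m. \<bar>hp i - h (Suc i)\<bar>)" by (rule sum_abs)
  also have "\<dots> \<le> (\<Sum>i<?m. e)" by (rule sum_mono) (use assms in force)
  finally have s1: "\<bar>\<Sum>i<?m. hp i - h (Suc i)\<bar> \<le> real ?m * e" by simp
  have s2: "\<bar>h ?m - h 0\<bar> \<le> 2 * B" using assms(2)[of ?m] assms(2)[of 0] by (simp add: abs_le_iff)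
  have "\<bar>(\<Sum>i<?m. hp i) - (\<Sum>i<?m. h i)\<bar> \<le> real ?m * e + 2 * B" using s1 s2 t u by linarith
  then have "\<bar>(\<Sum>i<?m. hp i) - (\<Sum>i<?m. h i)\<bar> / real ?m \<le> (real ?m * e + 2 * B) / real ?m"
    by (intro divide_right_mono) auto
  also have "(real ?m * e + 2 * B) / real ?m = e + 2 * B * inverse (real ?m)"
    by (simp add: field_simps)
  finally show ?thesis by (simp add: diff_divide_distrib[symmetric])
qed

lemma inv_type_exists:
  fixes FI :: "'f \<Rightarrow> 'a::complete_space list \<Rightarrow> 'a" and RI :: "'r \<Rightarrow> 'a list \<Rightarrow> real" and ra :: "'r \<Rightarrow> nat"
    and f :: "'a \<Rightarrow> 'a"
  assumes S: "is_structure fa ra FI RI"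
  shows "\<exists>p. is_type1 fa ra FI RI p \<and>
     (\<forall>\<phi>\<in>forms1 fa ra. \<forall>\<psi>. approx1 fa ra FI RI \<psi> (\<lambda>x. feval FI RI (\<lambda>_. f x) \<phi>) \<longrightarrow> (\<lambda>k. p (\<psi> k)) \<longlonglongrightarrow> p \<phi>)"
proof -
  define c :: 'a where "c = undefined"
  define Bnd where "Bnd \<phi> = (SOME B. \<forall>s. \<phi> \<in> forms1 fa ra \<longrightarrow> \<bar>feval FI RI s \<phi>\<bar> \<le> B)" for \<phi>
  have Bnd: "\<bar>feval FI RI s \<phi>\<bar> \<le> Bnd \<phi>" if "\<phi> \<in> forms1 fa ra" for s \<phi>
  proof -
    have "wf_form fa ra \<phi>" using that unfolding forms_n_def by auto
    then obtain B where "\<forall>s. \<bar>feval FI RI s \<phi>\<bar> \<le> B" using feval_bounded[OF S] by blast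
    then have "\<exists>B. \<forall>s. \<phi> \<in> forms1 fa ra \<longrightarrow> \<bar>feval FI RI s \<phi>\<bar> \<le> B" by blast
    from someI_ex[OF this] show ?thesis using that unfolding Bnd_def by blast
  qed
  define av where "av n \<phi> = (if \<phi> \<in> forms1 fa ra then (\<Sum>i<Suc n. feval FI RI (\<lambda>_. (f^^i) c) \<phi>) / real (Suc n) else 0)" for n \<phi>
  have avb: "\<bar>av n \<phi>\<bar> \<le> \<bar>Bnd \<phi>\<bar>" for n \<phi>
  proof (cases "\<phi> \<in> forms1 fa ra")
    case True
    then show ?thesis unfolding av_def using avg_bound[of "\<lambda>i. feval FI RI (\<lambda>_. (f^^i) c) \<phi>" "Bnd \<phi>" n] Bnd by simp
  qed (simp add: av_def)
  obtain q where Gnb: "inf (nhds q) (filtermap av sequentially) \<noteq> bot"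
    using cluster_exists[of av "\<lambda>\<phi>. \<bar>Bnd \<phi>\<bar>", OF avb] by blast
  define G where "G = inf (nhds q) (filtermap av sequentially)"
  have Gnb': "G \<noteq> bot" using Gnb unfolding G_def .
  have ev: "eventually P G" if "eventually (\<lambda>n. P (av n)) sequentially" for P
  proof -
    have "eventually P (filtermap av sequentially)" using that by (simp add: eventually_filtermap)
    then show ?thesis unfolding G_def by (rule filter_leD[OF inf_le2])
  qed
  have tq: "((\<lambda>g. g \<phi>) \<longlongrightarrow> q \<phi>) G" for \<phi>
    unfolding G_def by (rule tendsto_mono[OF inf_le1 eval_tendsto_nhds])
  have lim_eq: "q \<phi> = v" if "((\<lambda>g. g \<phi>) \<longlongrightarrow> v) G" for \<phi> v
    using tendsto_unique[OF Gnb' tq that] .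
  have f1: "\<phi> \<in> forms1 fa ra \<Longrightarrow> \<psi> \<in> forms1 fa ra \<Longrightarrow> AAdd \<phi> \<psi> \<in> forms1 fa ra" for \<phi> \<psi>
    unfolding forms_n_def by auto
  have f2: "\<phi> \<in> forms1 fa ra \<Longrightarrow> AScale r \<phi> \<in> forms1 fa ra" for \<phi> r
    unfolding forms_n_def by auto
  have f3: "AOne \<in> forms1 fa ra" unfolding forms_n_def by auto
  have htyp: "is_type1 fa ra FI RI q"
    unfolding is_type_over_def list.size
  proof (intro conjI ballI allI impI)
    have "eventually (\<lambda>g. g AOne = 1) G" by (rule ev) (simp add: av_def f3)
    then have "((\<lambda>g. g AOne) \<longlongrightarrow> 1) G" using tendsto_cong[of "\<lambda>g. g AOne" "\<lambda>_. 1" G 1] by simp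
    then show "q AOne = 1" by (rule lim_eq)
  next
    fix \<phi> \<psi> assume a: "\<phi> \<in> forms1 fa ra" "\<psi> \<in> forms1 fa ra"
    have "eventually (\<lambda>g. g (AAdd \<phi> \<psi>) = g \<phi> + g \<psi>) G"
      by (rule ev) (simp add: av_def f1 a sum.distrib add_divide_distrib del: sum.lessThan_Suc)
    moreover have "((\<lambda>g. g \<phi> + g \<psi>) \<longlongrightarrow> q \<phi> + q \<psi>) G" by (intro tendsto_add tq)
    ultimately have "((\<lambda>g. g (AAdd \<phi> \<psi>)) \<longlongrightarrow> q \<phi> + q \<psi>) G"
      using tendsto_cong[of "\<lambda>g. g (AAdd \<phi> \<psi>)" "\<lambda>g. g \<phi> + g \<psi>" G] by simp
    then show "q (AAdd \<phi> \<psi>) = q \<phi> + q \<psi>" by (rule lim_eq)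
  next
    fix \<phi> r assume a: "\<phi> \<in> forms1 fa ra"
    have "eventually (\<lambda>g. g (AScale r \<phi>) = r * g \<phi>) G"
      by (rule ev) (simp add: av_def f2 a sum_distrib_left del: sum.lessThan_Suc)
    moreover have "((\<lambda>g. r * g \<phi>) \<longlongrightarrow> r * q \<phi>) G" by (intro tendsto_mult tq tendsto_const)
    ultimately have "((\<lambda>g. g (AScale r \<phi>)) \<longlongrightarrow> r * q \<phi>) G"
      using tendsto_cong[of "\<lambda>g. g (AScale r \<phi>)" "\<lambda>g. r * g \<phi>" G] by simp
    then show "q (AScale r \<phi>) = r * q \<phi>" by (rule lim_eq)
  next
    fix \<phi> assume a: "\<phi> \<in> forms1 fa ra" and pos: "\<forall>b. 0 \<le> feval FI RI (par_asg b []) \<phi>"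
    have pa: "par_asg b [] = (\<lambda>_. b)" for b :: 'a by (rule ext) (simp add: par_asg_def)
    have "0 \<le> av n \<phi>" for n
      unfolding av_def using a pos by (simp add: pa sum_nonneg)
    then have "eventually (\<lambda>g. 0 \<le> g \<phi>) G" by (intro ev) simp
    then show "0 \<le> q \<phi>" using tendsto_lowerbound[OF tq _ Gnb'] by blast
  qed
  have hinv: "(\<lambda>k. q (\<psi> k)) \<longlonglongrightarrow> q \<phi>"
    if a: "\<phi> \<in> forms1 fa ra" and ap: "approx1 fa ra FI RI \<psi> (\<lambda>x. feval FI RI (\<lambda>_. f x) \<phi>)" for \<phi> \<psi>
  proof (rule LIMSEQ_I)
    fix r :: real assume "0 < r"
    then obtain N where N: "\<forall>k\<ge>N. \<forall>x. \<bar>feval FI RI (\<lambda>_. x) (\<psi> k) - feval FI RI (\<lambda>_. f x) \<phi>\<bar> \<le> r / 2"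
      using ap unfolding approx1_def by (meson half_gt_zero)
    have "\<bar>q (\<psi> k) - q \<phi>\<bar> \<le> r / 2" if k: "k \<ge> N" for k
    proof -
      have pk: "\<psi> k \<in> forms1 fa ra" using ap unfolding approx1_def by blast
      define B where "B = \<bar>Bnd \<phi>\<bar>"
      have key: "\<bar>av n (\<psi> k) - av n \<phi>\<bar> \<le> r / 2 + 2 * B * inverse (real (Suc n))" for n
      proof -
        have "\<bar>(\<Sum>i<Suc n. feval FI RI (\<lambda>_. (f^^i) c) (\<psi> k)) / real (Suc n) - (\<Sum>i<Suc n. feval FI RI (\<lambda>_. (f^^i) c) \<phi>) / real (Suc n)\<bar>
             \<le> r / 2 + 2 * B * inverse (real (Suc n))"
        proof (rule telescope_bound)
          fix i
          show "\<bar>feval FI RI (\<lambda>_. (f^^i) c) (\<psi> k) - feval FI RI (\<lambda>_. (f^^Suc i) c) \<phi>\<bar> \<le> r / 2"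
            using N k by simp
          show "\<bar>feval FI RI (\<lambda>_. (f^^i) c) \<phi>\<bar> \<le> B" unfolding B_def by (rule order_trans[OF Bnd[OF a] abs_ge_self])
        qed
        then show ?thesis unfolding av_def using a pk by simp
      qed
      have bM: "\<bar>q (\<psi> k) - q \<phi>\<bar> \<le> r / 2 + 2 * B * inverse (real (Suc M))" for M
      proof -
        have "eventually (\<lambda>n. \<bar>av n (\<psi> k) - av n \<phi>\<bar> \<le> r / 2 + 2 * B * inverse (real (Suc M))) sequentially"
          unfolding eventually_sequentially
        proof (intro exI allI impI)
          fix n assume "n \<ge> M"
          then have "inverse (real (Suc n)) \<le> inverse (real (Suc M))" by (simp add: le_imp_inverse_le)
          moreover have "0 \<le> B" unfolding B_def by simp
          ultimately have "2 * B * inverse (real (Suc n)) \<le> 2 * B * inverse (real (Suc M))" by (simp add: mult_left_mono)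
          then show "\<bar>av n (\<psi> k) - av n \<phi>\<bar> \<le> r / 2 + 2 * B * inverse (real (Suc M))" using key[of n] by linarith
        qed
        then have "eventually (\<lambda>g. \<bar>g (\<psi> k) - g \<phi>\<bar> \<le> r / 2 + 2 * B * inverse (real (Suc M))) G"
          by (rule ev)
        moreover have "((\<lambda>g. \<bar>g (\<psi> k) - g \<phi>\<bar>) \<longlongrightarrow> \<bar>q (\<psi> k) - q \<phi>\<bar>) G" by (intro tendsto_rabs tendsto_diff tq)
        ultimately show ?thesis using tendsto_upperbound Gnb' by blast
      qed
      have "(\<lambda>M. r / 2 + 2 * B * inverse (real (Suc M))) \<longlonglongrightarrow> r / 2 + 2 * B * 0"
        by (intro tendsto_add tendsto_mult tendsto_const LIMSEQ_inverse_real_of_nat)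
      then have lim: "(\<lambda>M. r / 2 + 2 * B * inverse (real (Suc M))) \<longlonglongrightarrow> r / 2" by simp
      show ?thesis by (rule LIMSEQ_le_const[OF lim]) (use bM in blast)
    qed
    then have "\<forall>k\<ge>N. norm (q (\<psi> k) - q \<phi>) < r" using \<open>0 < r\<close> by fastforce
    then show "\<exists>no. \<forall>n\<ge>no. norm (q (\<psi> n) - q \<phi>) < r" by blast
  qed
  show ?thesis using htyp hinv by blast
qed


lemma approx_pointwise:
  assumes "approx1 fa ra FI RI \<psi> P"
  shows "(\<lambda>k. feval FI RI (\<lambda>_. x) (\<psi> k)) \<longlonglongrightarrow> P x"
proof (rule LIMSEQ_I)
  fix r :: real assume "0 < r"
  then obtain N where N: "\<forall>k\<ge>N. \<forall>x. \<bar>feval FI RI (\<lambda>_. x) (\<psi> k) - P x\<bar> \<le> r / 2"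
    using assms unfolding approx1_def by (meson half_gt_zero)
  have "\<forall>k\<ge>N. norm (feval FI RI (\<lambda>_. x) (\<psi> k) - P x) < r"
  proof (intro allI impI)
    fix k assume "k \<ge> N"
    then have "\<bar>feval FI RI (\<lambda>_. x) (\<psi> k) - P x\<bar> \<le> r / 2" using N by blast
    then show "norm (feval FI RI (\<lambda>_. x) (\<psi> k) - P x) < r" using \<open>0 < r\<close> by simp
  qed
  then show "\<exists>no. \<forall>n\<ge>no. norm (feval FI RI (\<lambda>_. x) (\<psi> n) - P x) < r" by blast
qed

theorem mainTheorem14:
  fixes fa :: "'f \<Rightarrow> nat" and ra :: "'r \<Rightarrow> nat"
    and FI :: "'f \<Rightarrow> 'a::complete_space list \<Rightarrow> 'a" and RI :: "'r \<Rightarrow> 'a list \<Rightarrow> real"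
    and f :: "'a \<Rightarrow> 'a"
  assumes "is_structure fa ra FI RI"
    and "definable_fun fa ra FI RI f"
  shows "(\<exists>p. is_type1 fa ra FI RI p \<and>
            (\<forall>\<phi>\<in>forms1 fa ra.
               type_ext_value fa ra FI RI p (\<lambda>x. feval FI RI (\<lambda>_. f x) \<phi>) (p \<phi>)))
       \<and> (aleph0_saturated fa ra FI RI \<longrightarrow>
            (\<exists>c. \<forall>\<phi>\<in>forms1 fa ra. feval FI RI (\<lambda>_. c) \<phi> = feval FI RI (\<lambda>_. f c) \<phi>))"
proof -
  obtain p where p: "is_type1 fa ra FI RI p"
    and pinv: "\<forall>\<phi>\<in>forms1 fa ra. \<forall>\<psi>. approx1 fa ra FI RI \<psi> (\<lambda>x. feval FI RI (\<lambda>_. f x) \<phi>) \<longrightarrow> (\<lambda>k. p (\<psi> k)) \<longlonglongrightarrow> p \<phi>"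
    using inv_type_exists[OF assms(1), where f=f] by blast
  have part1: "\<forall>\<phi>\<in>forms1 fa ra. type_ext_value fa ra FI RI p (\<lambda>x. feval FI RI (\<lambda>_. f x) \<phi>) (p \<phi>)"
    unfolding type_ext_value_def using comp_definable[OF assms] pinv by blast
  have part2: "\<exists>c. \<forall>\<phi>\<in>forms1 fa ra. feval FI RI (\<lambda>_. c) \<phi> = feval FI RI (\<lambda>_. f c) \<phi>"
    if sat: "aleph0_saturated fa ra FI RI"
  proof -
    obtain c where c: "realizes fa ra FI RI [] p c" using sat p unfolding aleph0_saturated_def by blast
    have pa: "par_asg c [] = (\<lambda>_. c)" by (rule ext) (simp add: par_asg_def)
    have pc: "p \<phi> = feval FI RI (\<lambda>_. c) \<phi>" if "\<phi> \<in> forms1 fa ra" for \<phi>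
      using c that unfolding realizes_def pa by simp
    have "feval FI RI (\<lambda>_. c) \<phi> = feval FI RI (\<lambda>_. f c) \<phi>" if phi: "\<phi> \<in> forms1 fa ra" for \<phi>
    proof -
      obtain \<psi> where ap: "approx1 fa ra FI RI \<psi> (\<lambda>x. feval FI RI (\<lambda>_. f x) \<phi>)"
        using comp_definable[OF assms phi] by blast
      have l1: "(\<lambda>k. p (\<psi> k)) \<longlonglongrightarrow> p \<phi>" using pinv phi ap by blast
      have "\<psi> k \<in> forms1 fa ra" for k using ap unfolding approx1_def by blast
      then have "p (\<psi> k) = feval FI RI (\<lambda>_. c) (\<psi> k)" for k using pc by blast
      then have l2: "(\<lambda>k. p (\<psi> k)) \<longlonglongrightarrow> feval FI RI (\<lambda>_. f c) \<phi>"
        using approx_pointwise[OF ap, of c] by simp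
      have "p \<phi> = feval FI RI (\<lambda>_. f c) \<phi>" using LIMSEQ_unique[OF l1 l2] .
      then show ?thesis using pc[OF phi] by simp
    qed
    then show ?thesis by blast
  qed
  show ?thesis using p part1 part2 by blast
qed

end
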